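(* Let $\alpha\in(0,\pi]$ and $x,y\in S_\alpha$ with $|y|\le|x|$. Then \[ k_{S_\alpha}(x,y)\ge\frac{1}{\sin\frac{\alpha}{2}}\log\frac{|x|}{|y|}. \]
   Context: $S_\alpha=\{\rho e^{it}:\rho>0,\ t\in(0,\alpha)\}\subset\mathbb{C}$. For a domain $G\subsetneq\mathbb{R}^2$, $k_G(x,y)=\inf_\gamma\int_\gamma\frac{|dz|}{d(z,\partial G)}$, the infimum over rectifiable curves $\gamma\subset G$ joining $x$ and $y$ (quasihyperbolic distance). *)

theory Defs
  imports "HOL-Analysis.Analysis"
begin

definition sector :: "real \<Rightarrow> complex set" where
  "sector \<alpha> = {z. \<exists>\<rho>>0. \<exists>t. 0 < t \<and> t < \<alpha> \<and> z = rcis \<rho> t}"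

definition variation :: "(real \<Rightarrow> 'a::metric_space) \<Rightarrow> real \<Rightarrow> real \<Rightarrow> ennreal" where
  "variation g a b = (SUP ts \<in> {ts. ts \<noteq> [] \<and> sorted ts \<and> hd ts = a \<and> last ts = b}.
      ennreal (\<Sum>i<length ts - 1. dist (g (ts ! i)) (g (ts ! Suc i))))"

definition rectifiable_path :: "(real \<Rightarrow> 'a::metric_space) \<Rightarrow> bool" where
  "rectifiable_path g \<longleftrightarrow> path g \<and> variation g 0 1 < \<infinity>"

definition arclen :: "(real \<Rightarrow> 'a::metric_space) \<Rightarrow> real \<Rightarrow> real" where
  "arclen g t = enn2real (variation g 0 (min 1 (max 0 t)))"

text \<open>Line integral int_g f |dz| (Lebesgue-Stieltjes integral with respect to arc length).\<close>
definition arclength_integral :: "(real \<Rightarrow> 'a::metric_space) \<Rightarrow> ('a \<Rightarrow> real) \<Rightarrow> ennreal" where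
  "arclength_integral g f =
     (\<integral>\<^sup>+ t. ennreal (f (g t)) * indicator {0..1} t \<partial>(interval_measure (arclen g)))"

definition qh_dist :: "'a::euclidean_space set \<Rightarrow> 'a \<Rightarrow> 'a \<Rightarrow> ennreal" where
  "qh_dist G x y =
     (INF g \<in> {g. rectifiable_path g \<and> path_image g \<subseteq> G \<and> pathstart g = x \<and> pathfinish g = y}.
        arclength_integral g (\<lambda>z. 1 / infdist z (frontier G)))"

end

theory Submission
  imports Defs
begin


lemma Im_rcis': "Im (rcis r a) = r * sin a" by simp

lemma sector_char:
  assumes "0 < \<alpha>" "\<alpha> \<le> pi"
  shows "z \<in> sector \<alpha> \<longleftrightarrow> 0 < Im z \<and> Im (z * cis (-\<alpha>)) < 0"
proof
  assume "z \<in> sector \<alpha>"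
  then obtain \<rho> t where r: "\<rho> > 0" "0 < t" "t < \<alpha>" "z = rcis \<rho> t"
    unfolding sector_def by blast
  have "sin t > 0" using r assms by (intro sin_gt_zero) auto
  moreover have "sin (\<alpha> - t) > 0" using r assms by (intro sin_gt_zero) auto
  moreover have "z * cis (-\<alpha>) = rcis \<rho> (t - \<alpha>)" using r by (simp add: rcis_def cis_mult)
  moreover have "sin (t - \<alpha>) = - sin (\<alpha> - t)" using sin_minus[of "\<alpha> - t"] by simp
  ultimately show "0 < Im z \<and> Im (z * cis (-\<alpha>)) < 0" using r
    by (simp add: mult_pos_neg del: Im_rcis add: Im_rcis')
next
  assume h: "0 < Im z \<and> Im (z * cis (-\<alpha>)) < 0"
  define \<theta> where "\<theta> = Arg z"
  have z0: "z \<noteq> 0" using h by auto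
  have zr: "z = rcis (cmod z) \<theta>" unfolding \<theta>_def by (simp add: rcis_cmod_Arg)
  have th: "0 < \<theta>" "\<theta> < pi" using Arg_lt_pi h \<theta>_def by auto
  have "z * cis (-\<alpha>) = rcis (cmod z) (\<theta> - \<alpha>)" by (subst zr) (simp add: rcis_def cis_mult)
  hence "cmod z * sin (\<theta> - \<alpha>) < 0" using h by simp
  hence "sin (\<theta> - \<alpha>) < 0" using z0 by (simp add: mult_less_0_iff)
  hence "\<theta> < \<alpha>"
  proof -
    assume s: "sin (\<theta> - \<alpha>) < 0"
    show "\<theta> < \<alpha>"
    proof (rule ccontr)
      assume "\<not> \<theta> < \<alpha>"
      hence "sin (\<theta> - \<alpha>) \<ge> 0" using th assms by (intro sin_ge_zero) auto
      thus False using s by simp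
    qed
  qed
  moreover have "cmod z > 0" using z0 by simp
  ultimately show "z \<in> sector \<alpha>" unfolding sector_def using zr th by blast
qed

lemma open_sector:
  assumes "0 < \<alpha>" "\<alpha> \<le> pi"
  shows "open (sector \<alpha>)"
proof -
  have "sector \<alpha> = {z. 0 < Im z} \<inter> {z. Im (z * cis (-\<alpha>)) < 0}"
    using sector_char[OF assms] by auto
  moreover have "open {z. 0 < Im z}"
    by (intro open_Collect_less continuous_intros)
  moreover have "open {z. Im (z * cis (-\<alpha>)) < 0}"
    by (intro open_Collect_less continuous_intros)
  ultimately show ?thesis by auto
qed

lemma frontier_sector_point:
  assumes "0 < \<alpha>" "\<alpha> \<le> pi" and p: "p \<notin> sector \<alpha>"
    and lim: "(f \<longlongrightarrow> p) (at_right (0::real))"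
    and ev: "\<And>s. 0 < s \<Longrightarrow> s < \<alpha> \<Longrightarrow> f s \<in> sector \<alpha>"
  shows "p \<in> frontier (sector \<alpha>)"
proof -
  have "eventually (\<lambda>s. f s \<in> closure (sector \<alpha>)) (at_right (0::real))"
    unfolding eventually_at_right_field using assms(1) ev closure_subset by blast
  hence "p \<in> closure (sector \<alpha>)"
    using Lim_in_closed_set[OF closed_closure _ _ lim] by simp
  thus ?thesis using p open_sector[OF assms(1,2)] by (simp add: frontier_def interior_open)
qed

lemma infdist_sector:
  assumes a: "0 < \<alpha>" "\<alpha> \<le> pi" and z: "z \<in> sector \<alpha>"
  shows "0 < infdist z (frontier (sector \<alpha>)) \<and> infdist z (frontier (sector \<alpha>)) \<le> cmod z * sin (\<alpha>/2)"
proof -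
  obtain \<rho> t where r: "\<rho> > 0" "0 < t" "t < \<alpha>" "z = rcis \<rho> t"
    using z unfolding sector_def by blast
  have cz: "cmod z = \<rho>" using r by simp
  obtain p where pF: "p \<in> frontier (sector \<alpha>)" and pd: "dist z p \<le> cmod z * sin (\<alpha>/2)"
  proof (cases "t \<le> \<alpha>/2")
    case True
    define p where "p = complex_of_real (\<rho> * cos t)"
    have pf: "p \<in> frontier (sector \<alpha>)"
    proof (rule frontier_sector_point[OF a, where f = "\<lambda>s. rcis (\<rho> * cos t + s) s"])
      show "p \<notin> sector \<alpha>" using sector_char[OF a] p_def by simp
      have "((\<lambda>s. rcis (\<rho> * cos t + s) s) \<longlongrightarrow> rcis (\<rho> * cos t + 0) 0) (at_right (0::real))"
        unfolding rcis_def by (intro tendsto_intros)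
      thus "((\<lambda>s. rcis (\<rho> * cos t + s) s) \<longlongrightarrow> p) (at_right (0::real))" by (simp add: p_def)
      fix s :: real assume s: "0 < s" "s < \<alpha>"
      have "cos t \<ge> 0" using True a r by (intro cos_ge_zero) auto
      hence "\<rho> * cos t + s > 0" using r s by (simp add: add_nonneg_pos)
      thus "rcis (\<rho> * cos t + s) s \<in> sector \<alpha>" unfolding sector_def using s by blast
    qed
    have "z - p = \<i> * complex_of_real (\<rho> * sin t)"
      using r by (simp add: p_def complex_eq_iff)
    hence "dist z p = \<rho> * sin t" using r \<open>0<t\<close> \<open>t < \<alpha>\<close> a
      by (simp add: dist_norm norm_mult sin_ge_zero abs_of_nonneg)
    moreover have "sin t \<le> sin (\<alpha>/2)" using True a r by (intro sin_monotone_2pi_le) auto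
    ultimately have "dist z p \<le> cmod z * sin (\<alpha>/2)" using cz r(1) by (simp add: mult_left_mono)
    then show ?thesis using that pf by blast
  next
    case False
    define q where "q = \<rho> * cos (\<alpha> - t)"
    define p where "p = rcis q \<alpha>"
    have pf: "p \<in> frontier (sector \<alpha>)"
    proof (rule frontier_sector_point[OF a, where f = "\<lambda>s. rcis (q + s) (\<alpha> - s)"])
      have "p * cis (-\<alpha>) = complex_of_real q" by (simp add: p_def rcis_def cis_mult)
      hence "Im (p * cis (-\<alpha>)) = 0" by simp
      thus "p \<notin> sector \<alpha>" using sector_char[OF a, of p] by linarith
      have "((\<lambda>s. rcis (q + s) (\<alpha> - s)) \<longlongrightarrow> rcis (q + 0) (\<alpha> - 0)) (at_right (0::real))"
        unfolding rcis_def by (intro tendsto_intros)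
      thus "((\<lambda>s. rcis (q + s) (\<alpha> - s)) \<longlongrightarrow> p) (at_right (0::real))" by (simp add: p_def)
      fix s :: real assume s: "0 < s" "s < \<alpha>"
      have "cos (\<alpha> - t) \<ge> 0" using False a r by (intro cos_ge_zero) auto
      hence "q + s > 0" using r s by (simp add: q_def add_nonneg_pos)
      thus "rcis (q + s) (\<alpha> - s) \<in> sector \<alpha>" unfolding sector_def using s
        by (intro CollectI exI[of _ "q+s"] conjI exI[of _ "\<alpha> - s"]) auto
    qed
    have "(z - p) * cis (-\<alpha>) = rcis \<rho> (t - \<alpha>) - q"
    proof -
      have c1: "cis t * cis (-\<alpha>) = cis (t - \<alpha>)" by (simp add: cis_mult)
      have c2: "cis \<alpha> * cis (-\<alpha>) = 1" by (simp add: cis_mult)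
      have "(z - p) * cis (-\<alpha>) = of_real \<rho> * (cis t * cis (-\<alpha>)) - of_real q * (cis \<alpha> * cis (-\<alpha>))"
        by (simp add: p_def rcis_def r(4) algebra_simps)
      thus ?thesis by (simp add: c1 c2 rcis_def)
    qed
    hence "(z - p) * cis (-\<alpha>) = - \<i> * complex_of_real (\<rho> * sin (\<alpha> - t))"
      by (simp add: complex_eq_iff q_def cos_diff sin_diff algebra_simps)
    hence "dist z p = \<rho> * sin (\<alpha> - t)"
    proof -
      assume e: "(z - p) * cis (-\<alpha>) = - \<i> * complex_of_real (\<rho> * sin (\<alpha> - t))"
      have "dist z p = cmod ((z - p) * cis (-\<alpha>))" by (simp add: dist_norm norm_mult)
      also have "\<dots> = \<rho> * sin (\<alpha> - t)" using e r a
        by (simp add: norm_mult sin_ge_zero abs_of_nonneg)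
      finally show ?thesis .
    qed
    moreover have "sin (\<alpha> - t) \<le> sin (\<alpha>/2)" using False a r by (intro sin_monotone_2pi_le) auto
    ultimately have "dist z p \<le> cmod z * sin (\<alpha>/2)" using cz r(1) by (simp add: mult_left_mono)
    then show ?thesis using that pf by blast
  qed
  have "z \<notin> frontier (sector \<alpha>)" using z open_sector[OF a] by (simp add: frontier_def interior_open)
  hence "0 < infdist z (frontier (sector \<alpha>))"
    using pF by (intro infdist_pos_not_in_closed) auto
  moreover have "infdist z (frontier (sector \<alpha>)) \<le> dist z p" using pF by (rule infdist_le)
  ultimately show ?thesis using pd by simp
qed



definition psum :: "(real \<Rightarrow> 'a::metric_space) \<Rightarrow> real list \<Rightarrow> real" where
  "psum g ts = (\<Sum>i<length ts - 1. dist (g (ts ! i)) (g (ts ! Suc i)))"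

definition parts :: "real \<Rightarrow> real \<Rightarrow> real list set" where
  "parts a b = {ts. ts \<noteq> [] \<and> sorted ts \<and> hd ts = a \<and> last ts = b}"

lemma variation_psum: "variation g a b = (SUP ts \<in> parts a b. ennreal (psum g ts))"
  unfolding variation_def psum_def parts_def by simp

lemma psum_Nil[simp]: "psum g [] = 0" and psum_single[simp]: "psum g [a] = 0"
  by (simp_all add: psum_def)

lemma psum_Cons2[simp]: "psum g (a # b # r) = dist (g a) (g b) + psum g (b # r)"
  unfolding psum_def by (simp add: sum.lessThan_Suc_shift del: sum.lessThan_Suc)

lemma psum_nonneg: "psum g ts \<ge> 0"
  unfolding psum_def by (intro sum_nonneg) auto

lemma psum_append: "xs \<noteq> [] \<Longrightarrow> psum g (xs @ ys) = psum g xs + psum g (last xs # ys)"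
proof (induction xs rule: induct_list012)
  case (3 x y zs)
  thus ?case by simp
qed auto

lemma sorted_le_last: "sorted xs \<Longrightarrow> x \<in> set xs \<Longrightarrow> x \<le> last xs"
  by (induction xs rule: induct_list012) (auto simp: order_trans)

lemma sorted_hd_le: "sorted xs \<Longrightarrow> x \<in> set xs \<Longrightarrow> hd xs \<le> x"
  by (cases xs) auto

lemma psum_le_variation: "ts \<in> parts a b \<Longrightarrow> ennreal (psum g ts) \<le> variation g a b"
  unfolding variation_psum by (rule SUP_upper)

lemma parts_nonempty: "a \<le> b \<Longrightarrow> [a, b] \<in> parts a b"
  by (simp add: parts_def)

lemma variation_extend:
  assumes "a \<le> s" and sB: "s # B \<in> parts s c"
  shows "variation g a s + ennreal (psum g (s # B)) \<le> variation g a c"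
proof -
  have ne: "parts a s \<noteq> {}" using parts_nonempty[OF assms(1)] by blast
  have "variation g a s + ennreal (psum g (s # B)) = (SUP ts \<in> parts a s. ennreal (psum g ts) + ennreal (psum g (s # B)))"
    unfolding variation_psum by (rule ennreal_SUP_add_left[OF ne, symmetric])
  also have "\<dots> \<le> variation g a c"
  proof (rule SUP_least)
    fix ts assume ts: "ts \<in> parts a s"
    have "ts @ B \<in> parts a c"
    proof -
      have "\<forall>x\<in>set ts. x \<le> s" using ts sorted_le_last by (auto simp: parts_def)
      moreover have "\<forall>y\<in>set B. s \<le> y" using sB by (auto simp: parts_def)
      ultimately have "sorted (ts @ B)" using ts sB by (auto simp: parts_def sorted_append intro: order_trans)
      moreover have "last (ts @ B) = c" using ts sB by (cases B) (auto simp: parts_def)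
      ultimately show ?thesis using ts by (auto simp: parts_def)
    qed
    hence "ennreal (psum g (ts @ B)) \<le> variation g a c" by (rule psum_le_variation)
    moreover have "psum g (ts @ B) = psum g ts + psum g (s # B)"
      using ts by (simp add: psum_append parts_def)
    ultimately show "ennreal (psum g ts) + ennreal (psum g (s # B)) \<le> variation g a c"
      by (simp add: ennreal_plus[symmetric] psum_nonneg del: ennreal_plus)
  qed
  finally show ?thesis .
qed

lemma variation_snoc:
  assumes "a \<le> b" "b \<le> c"
  shows "variation g a b + ennreal (dist (g b) (g c)) \<le> variation g a c"
  using variation_extend[of a b "[c]" c g] assms by (simp add: parts_def)

lemma variation_fin:
  assumes fin: "variation g 0 1 < \<infinity>" and u: "0 \<le> u" "u \<le> 1"
  shows "variation g 0 u = ennreal (enn2real (variation g 0 u))"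
proof -
  have "variation g 0 u \<le> variation g 0 1"
  proof -
    have "variation g 0 u \<le> variation g 0 u + ennreal (dist (g u) (g 1))" by simp
    also have "\<dots> \<le> variation g 0 1" using variation_snoc[OF u, of g] .
    finally show ?thesis .
  qed
  hence "variation g 0 u < \<infinity>" using fin by simp
  thus ?thesis by simp
qed

lemma variation_right_cont:
  fixes g :: "real \<Rightarrow> 'a::metric_space"
  assumes pg: "path g" and fin: "variation g 0 1 < \<infinity>" and t: "0 \<le> t" "t < 1" and e: "e > 0"
  shows "\<exists>s. t < s \<and> s \<le> 1 \<and> enn2real (variation g 0 s) \<le> enn2real (variation g 0 t) + e"
proof -
  define w where "w = enn2real (variation g 0 1)"
  have W: "variation g 0 1 = ennreal w" using variation_fin[OF fin] w_def by simp
  have w0: "w \<ge> 0" by (simp add: w_def)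
  have psum_le: "psum g ts \<le> w" if "ts \<in> parts 0 1" for ts
  proof -
    have "ennreal (psum g ts) \<le> ennreal w" using psum_le_variation[OF that, of g] W by simp
    thus ?thesis using w0 by (subst (asm) ennreal_le_iff) auto
  qed
  obtain Q where Q: "Q \<in> parts 0 1" and Qw: "psum g Q > w - e/2"
  proof (cases "w < e/2")
    case True
    hence "w - e/2 < psum g [0,1]" using psum_nonneg[of g "[0,1]"] by linarith
    thus ?thesis using that[OF parts_nonempty[OF zero_le_one]] by blast
  next
    case False
    have "ennreal (w - e/2) < variation g 0 1" using W False e by (simp add: ennreal_lessI)
    then obtain Q where "Q \<in> parts 0 1" "ennreal (w - e/2) < ennreal (psum g Q)"
      unfolding variation_psum less_SUP_iff by blast
    hence "w - e/2 < psum g Q" using False by (subst (asm) ennreal_less_iff) auto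
    thus ?thesis using that \<open>Q \<in> parts 0 1\<close> by blast
  qed
  define A where "A = takeWhile (\<lambda>u. u \<le> t) Q"
  define B where "B = dropWhile (\<lambda>u. u \<le> t) Q"
  have QAB: "Q = A @ B" by (simp add: A_def B_def)
  have Qs: "sorted Q" "hd Q = 0" "last Q = 1" "Q \<noteq> []" using Q by (auto simp: parts_def)
  have Ane: "A \<noteq> []" using Qs t by (cases Q) (auto simp: A_def)
  have Bne: "B \<noteq> []"
  proof
    assume "B = []"
    hence "\<forall>u\<in>set Q. u \<le> t" by (simp add: B_def)
    hence "last Q \<le> t" using last_in_set[OF Qs(4)] by blast
    thus False using Qs t by simp
  qed
  define b where "b = hd B"
  obtain B' where B': "B = b # B'" using Bne b_def by (cases B) auto
  have "\<not> (\<lambda>u. u \<le> t) (hd (dropWhile (\<lambda>u. u \<le> t) Q))"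
    by (rule hd_dropWhile) (use Bne in \<open>unfold B_def\<close>)
  hence bt: "b > t" by (simp add: b_def B_def)
  have Aall: "\<forall>u\<in>set A. u \<le> t" unfolding A_def using set_takeWhileD by fastforce
  have b1: "b \<le> 1" using Qs QAB B' sorted_le_last[of Q b] by simp
  have sortedB: "sorted B" using Qs QAB sorted_append by auto
  have lastB: "last B = 1" using Qs QAB Bne by simp
  have cont: "continuous_on {0..1} g" using pg by (simp add: path_def)
  have "\<forall>e>0. \<exists>d>0. \<forall>x'\<in>{0..1}. dist x' t < d \<longrightarrow> dist (g x') (g t) < e"
    using cont t unfolding continuous_on_iff by auto
  then obtain d where d: "d > 0" "\<forall>s\<in>{0..1}. dist s t < d \<longrightarrow> dist (g s) (g t) < e/2"
    using e half_gt_zero by blast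
  define s where "s = min (t + d/2) ((t + b)/2)"
  have s: "t < s" "s < b" "s \<le> 1" using d(1) bt b1 unfolding s_def by (auto simp: min_def)
  have gts: "dist (g t) (g s) < e/2"
    using d(2)[rule_format, of s] s t d by (auto simp: s_def dist_real_def dist_commute)
  define la where "la = last A"
  have la: "la \<le> t" using Aall Ane by (simp add: la_def)
  have "psum g Q = psum g A + psum g (la # B)" using QAB Ane by (simp add: psum_append la_def)
  also have "psum g (la # B) = dist (g la) (g b) + psum g B" using B' by simp
  finally have pQ: "psum g Q = psum g A + dist (g la) (g b) + psum g B" by simp
  have "A @ [t] \<in> parts 0 t"
  proof -
    have "hd A = 0" using Qs QAB Ane by simp
    moreover have "sorted A" using Qs QAB sorted_append by auto
    ultimately show ?thesis using Aall Ane by (auto simp: parts_def sorted_append)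
  qed
  hence At1: "ennreal (psum g (A @ [t])) \<le> variation g 0 t" by (rule psum_le_variation)
  have At2: "psum g (A @ [t]) = psum g A + dist (g la) (g t)" using Ane by (simp add: psum_append la_def)
  have At: "psum g A + dist (g la) (g t) \<le> enn2real (variation g 0 t)"
  proof -
    have "ennreal (psum g A + dist (g la) (g t)) \<le> ennreal (enn2real (variation g 0 t))"
      using At1 At2 variation_fin[OF fin, of t] t by simp
    thus ?thesis by (subst (asm) ennreal_le_iff) auto
  qed
  have "s # B \<in> parts s 1" using sortedB s B' lastB by (auto simp: parts_def)
  hence "variation g 0 s + ennreal (psum g (s # B)) \<le> variation g 0 1"
    using s t by (intro variation_extend) auto
  moreover have "variation g 0 s \<noteq> \<infinity>"
  proof -
    have e1: "variation g 0 s = ennreal (enn2real (variation g 0 s))" using variation_fin[OF fin, of s] s t by simp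
    show ?thesis by (subst e1) simp
  qed
  ultimately have "ennreal (enn2real (variation g 0 s) + psum g (s # B)) \<le> ennreal w"
    using W by (simp add: ennreal_plus psum_nonneg ennreal_enn2real_if)
  hence Vs: "enn2real (variation g 0 s) + psum g (s # B) \<le> w"
    using w0 by (subst (asm) ennreal_le_iff) auto
  have psB: "psum g (s # B) = dist (g s) (g b) + psum g B" using B' by simp
  have tri: "dist (g la) (g b) \<le> dist (g la) (g t) + dist (g t) (g s) + dist (g s) (g b)"
    using dist_triangle[of "g la" "g b" "g t"] dist_triangle[of "g t" "g b" "g s"] by linarith
  have "enn2real (variation g 0 s) \<le> enn2real (variation g 0 t) + e"
    using Vs psB tri At pQ Qw gts by linarith
  thus ?thesis using s by blast
qed



lemma arclen_dist:
  fixes g :: "real \<Rightarrow> 'a::metric_space"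
  assumes fin: "variation g 0 1 < \<infinity>" and ab: "0 \<le> a" "a \<le> b" "b \<le> 1"
  shows "dist (g a) (g b) \<le> arclen g b - arclen g a"
proof -
  have ea: "arclen g a = enn2real (variation g 0 a)" and eb: "arclen g b = enn2real (variation g 0 b)"
    using ab by (simp_all add: arclen_def)
  have "variation g 0 a + ennreal (dist (g a) (g b)) \<le> variation g 0 b"
    using ab by (intro variation_snoc) auto
  moreover have fa: "variation g 0 a = ennreal (enn2real (variation g 0 a))" using variation_fin[OF fin] ab by simp
  moreover have fb: "variation g 0 b = ennreal (enn2real (variation g 0 b))" using variation_fin[OF fin] ab by simp
  ultimately have "ennreal (enn2real (variation g 0 a)) + ennreal (dist (g a) (g b)) \<le> ennreal (enn2real (variation g 0 b))"
    by metis
  hence "ennreal (enn2real (variation g 0 a) + dist (g a) (g b)) \<le> ennreal (enn2real (variation g 0 b))"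
    by (simp add: ennreal_plus)
  hence "enn2real (variation g 0 a) + dist (g a) (g b) \<le> enn2real (variation g 0 b)"
    by (subst (asm) ennreal_le_iff) auto
  thus ?thesis using ea eb by simp
qed

lemma arclen_mono:
  fixes g :: "real \<Rightarrow> 'a::metric_space"
  assumes fin: "variation g 0 1 < \<infinity>" and "x \<le> y"
  shows "arclen g x \<le> arclen g y"
proof -
  define a where "a = min 1 (max 0 x)"
  define b where "b = min 1 (max 0 y)"
  have ab: "0 \<le> a" "a \<le> b" "b \<le> 1" using assms(2) by (auto simp: a_def b_def)
  have "arclen g x = arclen g a" "arclen g y = arclen g b" using ab by (simp_all add: arclen_def a_def b_def)
  moreover have "dist (g a) (g b) \<le> arclen g b - arclen g a" by (rule arclen_dist[OF fin ab])
  moreover have "0 \<le> dist (g a) (g b)" by simp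
  ultimately show ?thesis by linarith
qed

lemma arclen_rcont:
  fixes g :: "real \<Rightarrow> 'a::metric_space"
  assumes pg: "path g" and fin: "variation g 0 1 < \<infinity>"
  shows "continuous (at_right a) (arclen g)"
proof -
  have monoF: "\<And>x y. x \<le> y \<Longrightarrow> arclen g x \<le> arclen g y" using arclen_mono[OF fin] by blast
  show ?thesis
  proof (rule iffD2[OF continuous_at_right_real_increasing], rule monoF, assumption, intro allI impI)
    fix e :: real assume e: "e > 0"
    show "\<exists>d>0. arclen g (a + d) - arclen g a < e"
    proof (cases "a < 0")
      case True
      have "arclen g (a + (-a/2)) = arclen g a" using True by (simp add: arclen_def)
      thus ?thesis using True e by (intro exI[of _ "-a/2"]) auto
    next
      case False
      show ?thesis
      proof (cases "a < 1")
        case True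
        obtain s where s: "a < s" "s \<le> 1" "enn2real (variation g 0 s) \<le> enn2real (variation g 0 a) + e/2"
          using variation_right_cont[OF pg fin _ True, of "e/2"] False e by auto
        have "arclen g (a + (s - a)) = enn2real (variation g 0 s)" using s False by (simp add: arclen_def)
        moreover have "arclen g a = enn2real (variation g 0 a)" using False True by (simp add: arclen_def)
        ultimately show ?thesis using s e by (intro exI[of _ "s - a"]) auto
      next
        case False': False
        have "arclen g (a + 1) = arclen g a" using False' by (simp add: arclen_def)
        thus ?thesis using e by (intro exI[of _ 1]) auto
      qed
    qed
  qed
qed

lemma emeasure_arclen:
  fixes g :: "real \<Rightarrow> 'a::metric_space"
  assumes pg: "path g" and fin: "variation g 0 1 < \<infinity>" and "a \<le> b"
  shows "emeasure (interval_measure (arclen g)) {a<..b} = ennreal (arclen g b - arclen g a)"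
  using emeasure_interval_measure_Ioc[OF assms(3) arclen_mono[OF fin] arclen_rcont[OF pg fin]] by simp



lemma telescope_bound:
  fixes a d :: "nat \<Rightarrow> real"
  assumes ar: "\<forall>i\<le>N. a i \<ge> r" and r: "r > 0" and del: "\<delta> > 0"
    and dd: "\<forall>i<N. d i \<ge> 0 \<and> d i \<ge> a i - a (Suc i)"
  shows "(r/(r+\<delta>)) * (ln (a 0) - ln (a N)) \<le> (\<Sum>i<N. d i / (a (Suc i) + \<delta>))"
proof -
  define \<kappa> where "\<kappa> = r/(r+\<delta>)"
  have k: "0 < \<kappa>" using r del by (simp add: \<kappa>_def)
  have "\<kappa> * (ln (a 0) - ln (a N)) = (\<Sum>i<N. \<kappa> * (ln (a i) - ln (a (Suc i))))"
    by (simp add: sum_distrib_left[symmetric] sum_lessThan_telescope'[of "\<lambda>i. ln (a i)" N])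
  also have "\<dots> \<le> (\<Sum>i<N. d i / (a (Suc i) + \<delta>))"
  proof (rule sum_mono)
    fix i assume i: "i \<in> {..<N}"
    define u where "u = a i"
    define v where "v = a (Suc i)"
    have u: "u \<ge> r" and v: "v \<ge> r" using ar i by (auto simp: u_def v_def)
    have d: "d i \<ge> 0" "d i \<ge> u - v" using dd i by (auto simp: u_def v_def)
    have vd: "v + \<delta> > 0" using v r del by simp
    show "\<kappa> * (ln (a i) - ln (a (Suc i))) \<le> d i / (a (Suc i) + \<delta>)"
    proof (cases "u \<le> v")
      case True
      hence "ln u \<le> ln v" using u r by simp
      hence "\<kappa> * (ln u - ln v) \<le> 0" using k by (simp add: mult_nonneg_nonpos)
      moreover have "0 \<le> d i / (v + \<delta>)" using d vd by simp
      ultimately show ?thesis by (simp add: u_def v_def)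
    next
      case False
      have vp: "v > 0" using v r by simp
      have "ln u - ln v = ln (u / v)" using vp u r by (simp add: ln_div)
      also have "\<dots> \<le> u / v - 1" using vp u r by (intro ln_le_minus_one) simp
      also have "\<dots> = (u - v) / v" using vp by (simp add: field_simps)
      finally have l1: "ln u - ln v \<le> (u - v) / v" .
      have "\<kappa> * ((u - v) / v) \<le> (u - v) / (v + \<delta>)"
      proof -
        have rd: "r * \<delta> \<le> v * \<delta>" using v del by (intro mult_right_mono) auto
        have "\<kappa> / v \<le> 1 / (v + \<delta>)"
        proof -
          have key: "r * (v + \<delta>) \<le> (r + \<delta>) * v" using rd by (simp add: algebra_simps)
          have rp: "r + \<delta> > 0" using r del by simp
          have eq: "r / (r + \<delta>) / v - 1 / (v + \<delta>) = (r * (v + \<delta>) - (r + \<delta>) * v) / ((r + \<delta>) * v * (v + \<delta>))"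
          proof -
            have n1: "(r + \<delta>) * v \<noteq> 0" "v + \<delta> \<noteq> 0" using vp vd rp by auto
            have "r / (r + \<delta>) / v = r / ((r + \<delta>) * v)" by (simp add: divide_divide_eq_left)
            thus ?thesis using diff_frac_eq[OF n1, of r 1] by simp
          qed
          have "(r * (v + \<delta>) - (r + \<delta>) * v) / ((r + \<delta>) * v * (v + \<delta>)) \<le> 0"
            using key vp vd rp by (intro divide_nonpos_pos) auto
          thus ?thesis unfolding \<kappa>_def using eq by linarith
        qed
        hence "\<kappa> / v * (u - v) \<le> 1 / (v + \<delta>) * (u - v)" using False by (intro mult_right_mono) auto
        thus ?thesis by simp
      qed
      moreover have "(u - v) / (v + \<delta>) \<le> d i / (v + \<delta>)" using d vd by (intro divide_right_mono) auto
      moreover have "\<kappa> * (ln u - ln v) \<le> \<kappa> * ((u - v) / v)" using l1 k by (intro mult_left_mono) auto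
      ultimately show ?thesis by (simp add: u_def v_def)
    qed
  qed
  finally show ?thesis by (simp add: \<kappa>_def)
qed

lemma kappa_limit:
  fixes A :: real and X :: ennreal
  assumes h: "\<And>\<kappa>. 0 < \<kappa> \<Longrightarrow> \<kappa> < 1 \<Longrightarrow> ennreal (\<kappa> * A) \<le> X"
  shows "ennreal A \<le> X"
proof (cases X)
  case (real x)
  show ?thesis
  proof (cases "A \<le> 0")
    case True thus ?thesis by (simp add: ennreal_neg)
  next
    case False
    have "A \<le> x"
    proof (rule ccontr)
      assume "\<not> A \<le> x"
      define \<kappa> where "\<kappa> = (x / A + 1) / 2"
      have k: "0 < \<kappa>" "\<kappa> < 1" using False real \<open>\<not> A \<le> x\<close> by (auto simp: \<kappa>_def divide_simps)
      have "\<kappa> * A = (x + A) / 2" using False by (simp add: \<kappa>_def field_simps)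
      moreover have "ennreal (\<kappa> * A) \<le> ennreal x" using h[OF k] real by simp
      hence "\<kappa> * A \<le> x" using real by (subst (asm) ennreal_le_iff) auto
      ultimately show False using \<open>\<not> A \<le> x\<close> by simp
    qed
    thus ?thesis using real by simp
  qed
next
  case top thus ?thesis by simp
qed



lemma integral_bound:
  fixes g :: "real \<Rightarrow> complex"
  assumes a: "0 < \<alpha>" "\<alpha> \<le> pi" and pg: "path g" and fin: "variation g 0 1 < \<infinity>"
    and img: "path_image g \<subseteq> sector \<alpha>" and k: "0 < \<kappa>" "\<kappa> < 1"
  shows "ennreal (\<kappa> * ((1 / sin (\<alpha>/2)) * (ln (cmod (g 0)) - ln (cmod (g 1)))))
           \<le> arclength_integral g (\<lambda>z. 1 / infdist z (frontier (sector \<alpha>)))"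
proof -
  define c0 where "c0 = 1 / sin (\<alpha>/2)"
  have sp: "sin (\<alpha>/2) > 0" using a by (intro sin_gt_zero) auto
  have c0: "c0 > 0" using sp by (simp add: c0_def)
  have inS: "g t \<in> sector \<alpha>" if "t \<in> {0..1}" for t
    using img that by (auto simp: path_image_def)
  have gpos: "cmod (g t) > 0" if "t \<in> {0..1}" for t
  proof -
    have "0 \<notin> sector \<alpha>" using sector_char[OF a, of 0] by simp
    hence "g t \<noteq> 0" using inS[OF that] by auto
    thus ?thesis by simp
  qed
  have cont: "continuous_on {0..1} g" using pg by (simp add: path_def)
  have ncont: "continuous_on {0..1} (\<lambda>t. cmod (g t))" by (intro continuous_intros cont)
  obtain t0 where t0: "t0 \<in> {0..1}" "\<forall>t\<in>{0..1}. cmod (g t0) \<le> cmod (g t)"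
    using continuous_attains_inf[OF compact_Icc _ ncont] by auto
  define r where "r = cmod (g t0)"
  have r: "r > 0" using gpos[OF t0(1)] by (simp add: r_def)
  have rle: "\<forall>t\<in>{0..1}. r \<le> cmod (g t)" using t0 by (simp add: r_def)
  define \<delta> where "\<delta> = r * (1 - \<kappa>) / \<kappa>"
  have del: "\<delta> > 0" using r k by (simp add: \<delta>_def)
  have kap: "r / (r + \<delta>) = \<kappa>"
  proof -
    have "r + \<delta> = r / \<kappa>" using k by (simp add: \<delta>_def field_simps)
    thus ?thesis using r k by simp
  qed
  have "uniformly_continuous_on {0..1} (\<lambda>t. cmod (g t))"
    by (rule compact_uniformly_continuous[OF ncont compact_Icc])
  then obtain dd where dd: "dd > 0"
    "\<forall>x\<in>{0..1}. \<forall>x'\<in>{0..1}. dist x' x < dd \<longrightarrow> dist (cmod (g x')) (cmod (g x)) < \<delta>"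
    unfolding uniformly_continuous_on_def using del by metis
  define N where "N = nat \<lceil>1/dd\<rceil> + 1"
  have N1: "N \<ge> 1" by (simp add: N_def)
  have Npos: "real N > 0" using N1 by simp
  have "real N > 1 / dd" unfolding N_def by linarith
  hence Ndd: "1 / real N < dd" using dd(1) Npos by (simp add: field_simps)
  define tt where "tt i = real i / real N" for i
  define aa where "aa i = cmod (g (tt i))" for i
  define cc where "cc i = c0 / (aa (Suc i) + \<delta>)" for i
  define J where "J i = {tt i <.. tt (Suc i)}" for i
  define F where "F = arclen g"
  have tt01: "tt i \<in> {0..1}" if "i \<le> N" for i using that Npos by (auto simp: tt_def field_simps)
  have ttmono: "tt i \<le> tt (Suc i)" for i using Npos by (simp add: tt_def divide_right_mono)
  have aar: "\<forall>i\<le>N. aa i \<ge> r" using rle tt01 by (simp add: aa_def)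
  have ccpos: "cc i \<ge> 0" for i
  proof -
    have "aa (Suc i) \<ge> 0" by (simp add: aa_def)
    thus ?thesis using c0 del by (simp add: cc_def)
  qed
  have pw: "(\<Sum>i<N. ennreal (cc i) * indicator (J i) t)
      \<le> ennreal (1 / infdist (g t) (frontier (sector \<alpha>))) * indicator {0..1} t" for t
  proof (cases "\<exists>i<N. t \<in> J i")
    case False
    hence "(\<Sum>i<N. ennreal (cc i) * indicator (J i) t) = 0" by (intro sum.neutral) auto
    thus ?thesis by simp
  next
    case True
    then obtain i0 where i0: "i0 < N" "t \<in> J i0" by blast
    have uniq: "j = i0" if "j < N" "t \<in> J j" for j
    proof (rule ccontr)
      assume "j \<noteq> i0"
      hence "j < i0 \<or> i0 < j" by auto
      thus False
      proof
        assume "j < i0"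
        hence "real (Suc j) \<le> real i0" by simp
        hence "tt (Suc j) \<le> tt i0" using Npos by (simp add: tt_def divide_right_mono)
        thus False using that i0 by (auto simp: J_def)
      next
        assume "i0 < j"
        hence "real (Suc i0) \<le> real j" by simp
        hence "tt (Suc i0) \<le> tt j" using Npos by (simp add: tt_def divide_right_mono)
        thus False using that i0 by (auto simp: J_def)
      qed
    qed
    have "(\<Sum>i<N. ennreal (cc i) * indicator (J i) t) = ennreal (cc i0) * indicator (J i0) t
          + (\<Sum>i\<in>{..<N} - {i0}. ennreal (cc i) * indicator (J i) t)"
      using i0 by (intro sum.remove) auto
    also have "(\<Sum>i\<in>{..<N} - {i0}. ennreal (cc i) * indicator (J i) t) = 0"
      using uniq by (intro sum.neutral) (auto simp: indicator_def)
    finally have S: "(\<Sum>i<N. ennreal (cc i) * indicator (J i) t) = ennreal (cc i0)" using i0 by simp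
    have t01: "t \<in> {0..1}"
      using i0 tt01[of i0] tt01[of "Suc i0"] by (auto simp: J_def)
    have s01: "tt (Suc i0) \<in> {0..1}" using tt01 i0 by simp
    have "dist t (tt (Suc i0)) < dd"
    proof -
      have "tt (Suc i0) - tt i0 = 1 / real N" using Npos by (simp add: tt_def field_simps)
      thus ?thesis using i0 Ndd by (auto simp: J_def dist_real_def)
    qed
    hence "dist (cmod (g t)) (cmod (g (tt (Suc i0)))) < \<delta>" using dd(2) t01 s01 by blast
    hence lt: "cmod (g t) < aa (Suc i0) + \<delta>" by (auto simp: aa_def dist_real_def)
    have gp: "cmod (g t) > 0" using gpos[OF t01] .
    have ID: "0 < infdist (g t) (frontier (sector \<alpha>))"
      "infdist (g t) (frontier (sector \<alpha>)) \<le> cmod (g t) * sin (\<alpha>/2)"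
      using infdist_sector[OF a inS[OF t01]] by auto
    have p1: "aa (Suc i0) + \<delta> > 0" using lt gp by linarith
    have p2: "0 < (aa (Suc i0) + \<delta>) * cmod (g t)" using p1 gp by simp
    have "cc i0 \<le> c0 / cmod (g t)" unfolding cc_def using lt p2 c0
      by (intro divide_left_mono) auto
    also have "c0 / cmod (g t) = 1 / (cmod (g t) * sin (\<alpha>/2))" by (simp add: c0_def)
    also have "\<dots> \<le> 1 / infdist (g t) (frontier (sector \<alpha>))"
      using ID by (intro divide_left_mono) auto
    finally have "cc i0 \<le> 1 / infdist (g t) (frontier (sector \<alpha>))" .
    thus ?thesis using S t01 by (simp add: ennreal_leI)
  qed
  have meas: "(\<lambda>t. ennreal (cc i) * indicator (J i) t) \<in> borel_measurable (interval_measure F)" for i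
    by (simp add: J_def)
  have emJ: "emeasure (interval_measure F) (J i) = ennreal (F (tt (Suc i)) - F (tt i))" for i
    unfolding J_def F_def by (rule emeasure_arclen[OF pg fin ttmono])
  have dF: "dist (g (tt i)) (g (tt (Suc i))) \<le> F (tt (Suc i)) - F (tt i)" if "i < N" for i
    unfolding F_def using tt01[of i] tt01[of "Suc i"] that ttmono[of i]
    by (intro arclen_dist[OF fin]) auto
  have "ennreal (\<kappa> * (c0 * (ln (aa 0) - ln (aa N))))
      = ennreal (c0 * ((r/(r+\<delta>)) * (ln (aa 0) - ln (aa N))))" using kap by (simp add: mult_ac)
  also have "\<dots> \<le> ennreal (c0 * (\<Sum>i<N. dist (g (tt i)) (g (tt (Suc i))) / (aa (Suc i) + \<delta>)))"
  proof (intro ennreal_leI mult_left_mono telescope_bound[OF aar r del])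
    show "\<forall>i<N. 0 \<le> dist (g (tt i)) (g (tt (Suc i))) \<and> aa i - aa (Suc i) \<le> dist (g (tt i)) (g (tt (Suc i)))"
      using norm_triangle_ineq2 by (auto simp: aa_def dist_norm)
  qed (use c0 in auto)
  also have "\<dots> = ennreal (\<Sum>i<N. cc i * dist (g (tt i)) (g (tt (Suc i))))"
    by (simp add: cc_def sum_distrib_left)
  also have "\<dots> \<le> ennreal (\<Sum>i<N. cc i * (F (tt (Suc i)) - F (tt i)))"
    using dF ccpos by (intro ennreal_leI sum_mono mult_left_mono) auto
  also have "\<dots> = (\<Sum>i<N. ennreal (cc i) * ennreal (F (tt (Suc i)) - F (tt i)))"
  proof -
    have "\<forall>i<N. 0 \<le> F (tt (Suc i)) - F (tt i)" using dF by (metis zero_le_dist order_trans)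
    thus ?thesis using ccpos
      by (subst sum_ennreal[symmetric]) (auto intro!: sum.cong simp: ennreal_mult mult_nonneg_nonneg)
  qed
  also have "\<dots> = (\<Sum>i<N. \<integral>\<^sup>+ t. ennreal (cc i) * indicator (J i) t \<partial>(interval_measure F))"
    by (simp add: nn_integral_cmult_indicator J_def emJ[symmetric])
  also have "\<dots> = (\<integral>\<^sup>+ t. (\<Sum>i<N. ennreal (cc i) * indicator (J i) t) \<partial>(interval_measure F))"
    by (rule nn_integral_sum[symmetric]) (rule meas)
  also have "\<dots> \<le> (\<integral>\<^sup>+ t. ennreal (1 / infdist (g t) (frontier (sector \<alpha>))) * indicator {0..1} t \<partial>(interval_measure F))"
    by (intro nn_integral_mono pw)
  also have "\<dots> = arclength_integral g (\<lambda>z. 1 / infdist z (frontier (sector \<alpha>)))"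
    by (simp add: arclength_integral_def F_def)
  finally show ?thesis
    using Npos by (simp add: aa_def tt_def c0_def mult_ac)
qed


theorem lemma5p3:
  fixes \<alpha> :: real and x y :: complex
  assumes "0 < \<alpha>" and "\<alpha> \<le> pi"
    and "x \<in> sector \<alpha>" and "y \<in> sector \<alpha>"
    and "norm y \<le> norm x"
  shows "ennreal ((1 / sin (\<alpha> / 2)) * ln (norm x / norm y)) \<le> qh_dist (sector \<alpha>) x y"
  unfolding qh_dist_def
proof (rule INF_greatest)
  fix g assume "g \<in> {g. rectifiable_path g \<and> path_image g \<subseteq> sector \<alpha> \<and> pathstart g = x \<and> pathfinish g = y}"
  hence g: "path g" "variation g 0 1 < \<infinity>" "path_image g \<subseteq> sector \<alpha>" "g 0 = x" "g 1 = y"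
    by (auto simp: rectifiable_path_def pathstart_def pathfinish_def)
  have "0 \<notin> sector \<alpha>" using sector_char[OF assms(1,2), of 0] by simp
  hence nx: "norm x > 0" "norm y > 0" using assms(3,4) by auto
  have L: "ln (norm x / norm y) = ln (cmod x) - ln (cmod y)" using nx by (simp add: ln_div)
  show "ennreal ((1 / sin (\<alpha> / 2)) * ln (norm x / norm y))
    \<le> arclength_integral g (\<lambda>z. 1 / infdist z (frontier (sector \<alpha>)))"
    unfolding L by (rule kappa_limit) (use integral_bound[OF assms(1,2) g(1,2,3)] g(4,5) in auto)
qed

end
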